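(* Let $f \in \Bbbk[t] \setminus \Bbbk$. Then $L(f) = \mathbb{W}_1 \cap \mathbb{W}[f]$, where the intersection is taken inside $\Bbbk(t)\partial$.
   Context: $\Bbbk$ is a field of characteristic zero. $\mathbb{W}_1 = \mathrm{Der}(\Bbbk[t]) = \Bbbk[t]\partial$ with $\partial = d/dt$ and bracket $[f\partial, g\partial] = (fg'-f'g)\partial$; it is viewed as a Lie subalgebra of $\Bbbk(t)\partial$. For $f,g \in \Bbbk[t]\setminus\{0\}$ with $f'g \in \Bbbk[f]$, write $L(f,g) = \Bbbk[f]\,g\partial$ (a Lie subalgebra of $\mathbb{W}_1$). Let $g_f$ be the unique monic polynomial of minimal degree with $f'g_f \in \Bbbk[f]$, and put $L(f) = L(f,g_f)$. $\mathbb{W}[f] = \mathrm{Der}(\Bbbk[f]) = \Bbbk[f]\partial_f$, identified with the subalgebra $\frac{1}{f'}\Bbbk[f]\partial$ of $\Bbbk(t)\partial$ (i.e. $\partial_f = \frac{1}{f'}\partial$). *)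

theory Defs
  imports "HOL-Computational_Algebra.Polynomial_Factorial"
begin

text \<open>A derivation h \<partial> of k(t) is represented by its coefficient h :: 'a poly fract
  (an element of k(t)); the bracket plays no role in the statement.\<close>

definition in_kf :: "'a::comm_ring_1 poly \<Rightarrow> 'a poly \<Rightarrow> bool" where
  "in_kf f q \<longleftrightarrow> (\<exists>h. q = pcompose h f)"

definition gf :: "'a::field poly \<Rightarrow> 'a poly" where
  "gf f = (THE g. lead_coeff g = 1 \<and> in_kf f (pderiv f * g) \<and>
       (\<forall>g'. g' \<noteq> 0 \<longrightarrow> in_kf f (pderiv f * g') \<longrightarrow> degree g \<le> degree g'))"

definition Lfg :: "'a::field poly \<Rightarrow> 'a poly \<Rightarrow> 'a poly fract set" where
  "Lfg f g = {to_fract (pcompose h f * g) | h. True}"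

definition Lf :: "'a::field poly \<Rightarrow> 'a poly fract set" where
  "Lf f = Lfg f (gf f)"

definition W1 :: "'a::field poly fract set" where
  "W1 = range to_fract"

text \<open>W[f] = k[f] \<partial>_f = (1/f') k[f] \<partial> inside k(t) \<partial>.\<close>
definition Wf :: "'a::field poly \<Rightarrow> 'a poly fract set" where
  "Wf f = {to_fract (pcompose h f) / to_fract (pderiv f) | h. True}"

end

theory Submission
  imports Defs
begin


lemma pcompose_monom: "pcompose (monom c n) q = smult c (q ^ n)"
  by (induction n) (simp_all add: monom_Suc pcompose_pCons monom_0)

lemma poly_vs: "vector_space (smult :: 'a::field \<Rightarrow> 'a poly \<Rightarrow> 'a poly)"
  by unfold_locales (simp_all add: smult_add_right smult_add_left)

lemma exists_kf_multiple:
  fixes p q :: "'a::field poly"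
  assumes "p \<noteq> 0"
  shows "\<exists>h. h \<noteq> 0 \<and> p dvd pcompose h q"
proof -
  interpret V: vector_space "smult :: 'a \<Rightarrow> 'a poly \<Rightarrow> 'a poly" by (rule poly_vs)
  define d where "d = degree p"
  define v where "v i = (q ^ i) mod p" for i
  show ?thesis
  proof (cases "inj_on v {..d}")
    case False
    then obtain i j where ij: "i \<le> d" "j \<le> d" "i \<noteq> j" "v i = v j"
      unfolding inj_on_def by auto
    define h where "h = monom (1::'a) j - monom 1 i"
    have "coeff h j = 1" using ij(3) by (simp add: h_def coeff_monom)
    then have "h \<noteq> 0" by auto
    moreover have "pcompose h q = q ^ j - q ^ i"
      by (simp add: h_def pcompose_diff pcompose_monom)
    moreover have "p dvd q ^ j - q ^ i"
      using ij(4) unfolding v_def by (metis mod_eq_dvd_iff)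
    ultimately show ?thesis by metis
  next
    case True
    define T where "T = (\<lambda>i. monom (1::'a) i) ` {..<d}"
    define W where "W = v ` {..d}"
    have cardW: "card W = Suc d" unfolding W_def using True by (simp add: card_image)
    have WT: "W \<subseteq> V.span T"
    proof
      fix w assume "w \<in> W"
      then obtain i where w: "w = v i" unfolding W_def by auto
      show "w \<in> V.span T"
      proof (cases "w = 0")
        case True then show ?thesis by (simp add: V.span_zero)
      next
        case False
        have dl: "degree w < d" using degree_mod_less[OF assms, of "q^i"] False
          unfolding w v_def d_def by auto
        have "w = (\<Sum>k<d. smult (coeff w k) (monom 1 k))"
        proof -
          have "w = (\<Sum>k\<le>d - 1. monom (coeff w k) k)"
            using poly_as_sum_of_monoms'[of w "d - 1"] dl by simp
          also have "\<dots> = (\<Sum>k<d. monom (coeff w k) k)"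
            using dl by (intro sum.cong) auto
          finally show ?thesis by (simp add: smult_monom)
        qed
        also have "\<dots> \<in> V.span T"
          by (intro V.span_sum V.span_scale V.span_base) (auto simp: T_def)
        finally show ?thesis .
      qed
    qed
    have "V.dependent W"
    proof (rule ccontr)
      assume ind: "\<not> V.dependent W"
      have "card W \<le> card T" using V.independent_span_bound[OF _ ind WT] T_def by simp
      also have "card T \<le> d" unfolding T_def using card_image_le[of "{..<d}"] by simp
      finally show False using cardW by simp
    qed
    then obtain u where u: "\<exists>w\<in>W. u w \<noteq> 0" "(\<Sum>w\<in>W. smult (u w) w) = 0"
      using V.dependent_finite[of W] unfolding W_def by auto
    define h where "h = (\<Sum>i\<le>d. monom (u (v i)) i)"
    have "h \<noteq> 0"
    proof
      assume h0: "h = 0"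
      obtain i where i: "i \<le> d" "u (v i) \<noteq> 0" using u(1) unfolding W_def by auto
      have "coeff h i = u (v i)" unfolding h_def coeff_sum using i(1)
        by (simp add: coeff_monom sum.delta)
      then show False using h0 i by simp
    qed
    moreover have "p dvd pcompose h q"
    proof -
      have hq: "pcompose h q = (\<Sum>i\<le>d. smult (u (v i)) (q ^ i))"
        by (simp add: h_def pcompose_sum pcompose_monom)
      have "(\<Sum>i\<le>d. smult (u (v i)) (v i)) = 0"
        using u(2) True unfolding W_def by (simp add: sum.reindex)
      then have "pcompose h q = (\<Sum>i\<le>d. smult (u (v i)) (q ^ i - v i))"
        by (simp add: hq smult_diff_right sum_subtractf)
      also have "p dvd \<dots>"
        by (intro dvd_sum dvd_smult) (simp add: v_def mod_eq_dvd_iff[symmetric])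
      finally show ?thesis .
    qed
    ultimately show ?thesis by blast
  qed
qed


lemma same_lead_diff:
  fixes p q :: "'a::field poly"
  assumes "degree p = degree q" "lead_coeff p = lead_coeff q" "p - q \<noteq> 0"
  shows "degree (p - q) < degree p"
proof -
  have le: "degree (p - q) \<le> degree p" using assms(1) by (simp add: degree_diff_le)
  have "coeff (p - q) (degree p) = 0" using assms(1,2) by simp
  then have "degree (p - q) \<noteq> degree p" using assms(3) by (metis leading_coeff_0_iff)
  then show ?thesis using le by simp
qed

locale fsetup =
  fixes f :: "'k::field_char_0 poly"
  assumes degf: "degree f \<ge> 1"
begin

definition S where "S g \<longleftrightarrow> in_kf f (pderiv f * g)"

lemma fd0: "pderiv f \<noteq> 0" using degf by (simp add: pderiv_eq_0_iff)

lemma S_diff: "S g1 \<Longrightarrow> S g2 \<Longrightarrow> S (g1 - g2)"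
  unfolding S_def in_kf_def
  by (metis pcompose_diff right_diff_distrib)

lemma S_mult: "S g \<Longrightarrow> S (pcompose a f * g)"
proof -
  assume "S g"
  then obtain h where "pderiv f * g = pcompose h f" unfolding S_def in_kf_def by auto
  then have "pderiv f * (pcompose a f * g) = pcompose (a * h) f"
    by (simp add: pcompose_mult mult.left_commute)
  then show ?thesis unfolding S_def in_kf_def by blast
qed

lemma S_smult: "S g \<Longrightarrow> S (smult c g)"
  using S_mult[of g "[:c:]"] by simp

lemma S_deg:
  assumes "pderiv f * g = pcompose h f" "g \<noteq> 0"
  shows "degree g + (degree f - 1) = degree f * degree h"
proof -
  have "degree (pderiv f * g) = degree f - 1 + degree g"
    using fd0 assms(2) by (simp add: degree_mult_eq degree_pderiv)
  moreover have "degree (pderiv f * g) = degree f * degree h"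
    using assms(1) by (simp add: degree_pcompose mult.commute)
  ultimately show ?thesis by linarith
qed

lemma S_nonzero: "\<exists>g. g \<noteq> 0 \<and> S g"
proof -
  obtain h where h: "h \<noteq> 0" "pderiv f dvd pcompose h f"
    using exists_kf_multiple[OF fd0] by blast
  then obtain g where g: "pcompose h f = pderiv f * g" by (auto elim: dvdE)
  have "pcompose h f \<noteq> 0" using h(1) degf pcompose_eq_0 by fastforce
  then have "g \<noteq> 0" using g by auto
  moreover have "S g" unfolding S_def in_kf_def using g by metis
  ultimately show ?thesis by blast
qed

definition P where "P g \<longleftrightarrow> lead_coeff g = 1 \<and> in_kf f (pderiv f * g) \<and>
       (\<forall>g'. g' \<noteq> 0 \<longrightarrow> in_kf f (pderiv f * g') \<longrightarrow> degree g \<le> degree g')"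

lemma P_ex: "\<exists>g. P g"
proof -
  define m where "m = (LEAST k. \<exists>g. g \<noteq> 0 \<and> S g \<and> degree g = k)"
  have ex: "\<exists>k. \<exists>g. g \<noteq> 0 \<and> S g \<and> degree g = k" using S_nonzero by blast
  have "\<exists>g. g \<noteq> 0 \<and> S g \<and> degree g = m"
    unfolding m_def by (rule LeastI_ex[OF ex])
  then obtain g1 where g1: "g1 \<noteq> 0" "S g1" "degree g1 = m" by blast
  have min: "m \<le> degree g'" if "g' \<noteq> 0" "S g'" for g'
    unfolding m_def using that by (intro Least_le) blast
  define g0 where "g0 = smult (1 / lead_coeff g1) g1"
  have "lead_coeff g0 = 1" using g1(1) by (simp add: g0_def lead_coeff_smult)
  moreover have "S g0" using S_smult[OF g1(2)] g0_def by simp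
  moreover have "lead_coeff g1 \<noteq> 0" using g1(1) by simp
  then have "degree g0 = m" using g1 by (simp add: g0_def degree_smult_eq)
  ultimately show ?thesis unfolding P_def using min S_def by metis
qed

lemma P_unique: "P g \<Longrightarrow> P g' \<Longrightarrow> g = g'"
proof (rule ccontr)
  assume a: "P g" "P g'" "g \<noteq> g'"
  have nz: "g \<noteq> 0" "g' \<noteq> 0" using a unfolding P_def by auto
  have deq: "degree g = degree g'" using a nz unfolding P_def by (meson le_antisym)
  have "degree (g - g') < degree g"
    using same_lead_diff[of g g'] deq a unfolding P_def by simp
  moreover have "S (g - g')" using a S_diff unfolding P_def S_def by blast
  ultimately show False using a(1) a(3) unfolding P_def S_def
    by (metis eq_iff_diff_eq_0 not_le)
qed

lemma gf_P: "P (gf f)"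
proof -
  obtain g where "P g" using P_ex by blast
  have "gf f = g" unfolding gf_def
    using P_unique \<open>P g\<close> unfolding P_def[symmetric] by (intro the_equality) auto
  then show ?thesis using \<open>P g\<close> by simp
qed

lemma S_char: "S g \<Longrightarrow> \<exists>h. g = pcompose h f * gf f"
proof (induction "degree g" arbitrary: g rule: less_induct)
  case less
  define g0 where "g0 = gf f"
  have P0: "P g0" using gf_P g0_def by simp
  show ?case
  proof (cases "g = 0")
    case True then show ?thesis by (intro exI[of _ 0]) simp
  next
    case False
    have g0nz: "g0 \<noteq> 0" using P0 unfolding P_def by auto
    obtain a where a: "pderiv f * g = pcompose a f" using less.prems unfolding S_def in_kf_def by auto
    obtain a0 where a0: "pderiv f * g0 = pcompose a0 f" using P0 unfolding P_def in_kf_def by auto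
    have d: "degree g + (degree f - 1) = degree f * degree a" using S_deg[OF a False] .
    have d0: "degree g0 + (degree f - 1) = degree f * degree a0" using S_deg[OF a0 g0nz] .
    have ge: "degree g0 \<le> degree g" using P0 False less.prems unfolding P_def S_def by blast
    define m where "m = degree a - degree a0"
    have "degree f * degree a0 \<le> degree f * degree a" using d d0 ge by linarith
    then have "degree a0 \<le> degree a" using degf by simp
    then have "degree f * degree a = degree f * degree a0 + degree f * m"
      unfolding m_def by (simp add: diff_mult_distrib2)
    then have dg: "degree g = degree g0 + degree f * m" using d d0 by linarith
    have fnz: "f \<noteq> 0" using degf by auto
    define c where "c = lead_coeff g / lead_coeff f ^ m"
    define r where "r = g - pcompose (monom c m) f * g0"
    have t: "pcompose (monom c m) f * g0 = smult c (f ^ m * g0)"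
      by (simp add: pcompose_monom)
    have lcf: "lead_coeff f \<noteq> 0" using fnz by simp
    have lcg: "lead_coeff g \<noteq> 0" using False by simp
    have cnz: "c \<noteq> 0" using lcf lcg by (simp add: c_def)
    have deg_t: "degree (pcompose (monom c m) f * g0) = degree g"
      unfolding t using cnz fnz g0nz dg by (simp add: degree_mult_eq degree_power_eq mult.commute)
    have lc_t: "lead_coeff (pcompose (monom c m) f * g0) = lead_coeff g"
      unfolding t using cnz fnz g0nz P0 lcf unfolding P_def
      by (simp add: lead_coeff_smult lead_coeff_mult lead_coeff_power c_def)
    have Sr: "S r" unfolding r_def
      using S_diff[OF less.prems S_mult] P0 unfolding P_def S_def by blast
    show ?thesis
    proof (cases "r = 0")
      case True
      then show ?thesis unfolding r_def g0_def by auto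
    next
      case False
      have "degree r < degree g" unfolding r_def
        using same_lead_diff[of g "pcompose (monom c m) f * g0", OF deg_t[symmetric] lc_t[symmetric]] False
        unfolding r_def by simp
      then obtain h where h: "r = pcompose h f * gf f" using less.hyps Sr by blast
      have "g = pcompose (h + monom c m) f * gf f"
        using h unfolding r_def g0_def by (simp add: pcompose_add algebra_simps)
      then show ?thesis by blast
    qed
  qed
qed

lemma W_char: "W1 \<inter> Wf f = {to_fract g | g. S g}"
proof (intro set_eqI iffI)
  fix x assume "x \<in> W1 \<inter> Wf f"
  then have x1: "x \<in> W1" and x2: "x \<in> Wf f" by auto
  from x1 obtain g where xg: "x = to_fract g" unfolding W1_def by auto
  from x2 obtain h where xh: "x = to_fract (pcompose h f) / to_fract (pderiv f)" unfolding Wf_def by auto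
  note x = xg xh
  then have "to_fract (g * pderiv f) = to_fract (pcompose h f)"
    using fd0 by (simp add: field_simps)
  then have "g * pderiv f = pcompose h f" by (simp only: to_fract_eq_iff)
  then have "pderiv f * g = pcompose h f" by (simp add: mult.commute)
  then show "x \<in> {to_fract g | g. S g}" using x unfolding S_def in_kf_def by blast
next
  fix x assume "x \<in> {to_fract g | g. S g}"
  then obtain g h where x: "x = to_fract g" "pderiv f * g = pcompose h f"
    unfolding S_def in_kf_def by auto
  then have "x = to_fract (pcompose h f) / to_fract (pderiv f)"
    using fd0 by (metis (no_types, lifting) nonzero_eq_divide_eq mult.commute to_fract_eq_0_iff to_fract_mult)
  then have "x \<in> Wf f" unfolding Wf_def by blast
  moreover have "x \<in> W1" using x(1) unfolding W1_def by blast
  ultimately show "x \<in> W1 \<inter> Wf f" by blast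
qed

lemma main: "Lf f = W1 \<inter> Wf f"
proof -
  have "Lf f = {to_fract g | g. S g}"
  proof (intro set_eqI iffI)
    fix x assume "x \<in> Lf f"
    then obtain h where x: "x = to_fract (pcompose h f * gf f)" unfolding Lf_def Lfg_def by auto
    have "S (gf f)" using gf_P unfolding P_def S_def by blast
    then show "x \<in> {to_fract g | g. S g}" using x S_mult by blast
  next
    fix x assume "x \<in> {to_fract g | g. S g}"
    then show "x \<in> Lf f" using S_char unfolding Lf_def Lfg_def by blast
  qed
  then show ?thesis using W_char by simp
qed

end

theorem mainTheorem1:
  fixes f :: "'k::field_char_0 poly"
  assumes "degree f \<ge> 1"
  shows "Lf f = W1 \<inter> Wf f"
  using fsetup.main[of f] assms fsetup.intro by blast

end
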